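(* Let $L\ge n\ge 1$ and let $q(x)\in\mathrm{GF}(2)[x]/(x^L+1)$ be nonzero, represented as a polynomial of degree at most $n-1$. Let $S$ be a set of $n-1$ bit positions consecutive modulo $L$. If $w$ is chosen uniformly at random in $\mathrm{GF}(2)[x]/(x^L+1)$, then for every $y$, the probability that $q(x)w\bmod(x^L+1)$ and $y$ agree in every bit position outside $S$ equals $2^{-(L-n+1)}$.
   Context: Elements of $\mathrm{GF}(2)[x]/(x^L+1)$ are identified with polynomials $\sum_{i=0}^{L-1}c_ix^i$ over $\mathrm{GF}(2)$; bit position $i$ refers to the coefficient of $x^i$. A set of $m$ positions is consecutive modulo $L$ if it equals $\{k\bmod L,\dots,(k+m-1)\bmod L\}$ for some integer $k$. *)

theory Defs
  imports "HOL-Computational_Algebra.Polynomial" "HOL-Library.Z2"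
begin

text \<open>GF(2) is the type bit. Elements of GF(2)[x]/(x^L+1) are represented by their
  canonical representatives: polynomials over GF(2) of degree less than L.\<close>

definition cyc_modulus :: "nat \<Rightarrow> bit poly" where
  "cyc_modulus L = monom 1 L + 1"

definition cyc_ring :: "nat \<Rightarrow> bit poly set" where
  "cyc_ring L = {p. degree p < L}"

definition cyc_mult :: "nat \<Rightarrow> bit poly \<Rightarrow> bit poly \<Rightarrow> bit poly" where
  "cyc_mult L a b = (a * b) mod cyc_modulus L"

definition consecutive_mod :: "nat \<Rightarrow> nat \<Rightarrow> nat set \<Rightarrow> bool" where
  "consecutive_mod L m S \<longleftrightarrow> (\<exists>k::int. S = (\<lambda>i. nat ((k + int i) mod int L)) ` {..<m})"

end

theory Submission
  imports Defs
begin


lemma bitpoly_add_self: "(p::bit poly) + p = 0"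
proof (rule poly_eqI)
  fix n
  have "\<And>x::bit. x + x = 0" by (metis bit_not_zero_iff one_add_one bit_2_eq_0 add_0)
  then show "coeff (p + p) n = coeff 0 n" by (simp only: coeff_add coeff_0)
qed

lemma degree_cyc_modulus: "L > 0 \<Longrightarrow> degree (cyc_modulus L) = L"
  unfolding cyc_modulus_def by (simp add: degree_add_eq_left degree_monom_eq)

lemma monom_mod:
  assumes L: "L > 0"
  shows "monom (1::bit) e mod cyc_modulus L = monom 1 (e mod L)"
proof (induction e rule: less_induct)
  case (less e)
  show ?case
  proof (cases "e < L")
    case True
    then show ?thesis using L by (simp add: mod_poly_less degree_cyc_modulus degree_monom_eq)
  next
    case False
    have "monom (1::bit) e = monom 1 (e - L) * monom 1 L"
      using False by (simp add: mult_monom)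
    also have "monom (1::bit) L = cyc_modulus L + 1"
      unfolding cyc_modulus_def by (simp add: add.assoc bitpoly_add_self)
    finally have "monom (1::bit) e = monom 1 (e - L) * cyc_modulus L + monom 1 (e - L)"
      by (simp add: algebra_simps)
    then have "monom (1::bit) e mod cyc_modulus L = monom 1 (e - L) mod cyc_modulus L"
      by simp
    also have "\<dots> = monom 1 ((e - L) mod L)" using less L False by simp
    also have "(e - L) mod L = e mod L" using False by (simp add: le_mod_geq)
    finally show ?thesis .
  qed
qed

lemma monom_mod': "L > 0 \<Longrightarrow> monom (c::bit) e mod cyc_modulus L = monom c (e mod L)"
proof -
  assume L: "L > 0"
  have "monom c e = smult c (monom 1 e)" by (simp add: smult_monom)
  then have "monom c e mod cyc_modulus L = smult c (monom 1 e mod cyc_modulus L)"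
    by (simp add: mod_smult_left)
  then show ?thesis using monom_mod[OF L] by (simp add: smult_monom)
qed

lemma modeq_aux:
  fixes i j k L :: nat
  assumes "j < L" "k < L" "i < L"
  shows "((j + k) mod L = i) = (k = (i + L - j) mod L)"
proof -
  have a: "(j+k) mod L = (if j+k<L then j+k else j+k-L)"
    using assms by (auto simp: le_mod_geq)
  have b: "(i+L-j) mod L = (if i+L-j < L then i+L-j else i+L-j-L)"
    using assms by (auto simp: le_mod_geq)
  show ?thesis unfolding a b using assms by auto
qed

lemma cyc_mult_coeff:
  assumes L: "L > 0" and dq: "degree q < L" and dw: "degree w < L" and i: "i < L"
  shows "coeff (cyc_mult L q w) i = (\<Sum>j<L. coeff q j * coeff w ((i + L - j) mod L))"
proof -
  define m where "m = cyc_modulus L"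
  have lt: "{..L-1} = {..<L}" using L by auto
  have q: "q = (\<Sum>j<L. monom (coeff q j) j)"
    using poly_as_sum_of_monoms'[of q "L-1"] dq lt by simp
  have w: "w = (\<Sum>k<L. monom (coeff w k) k)"
    using poly_as_sum_of_monoms'[of w "L-1"] dw lt by simp
  define R where "R = (\<Sum>j<L. \<Sum>k<L. monom (coeff q j * coeff w k) ((j+k) mod L))"
  have qw: "q * w = (\<Sum>j<L. \<Sum>k<L. monom (coeff q j * coeff w k) (j+k))"
    by (subst q, subst w) (simp add: sum_product mult_monom)
  have "m dvd (q * w - R)"
    unfolding qw R_def sum_subtractf[symmetric]
    by (intro dvd_sum) (simp add: mod_eq_dvd_iff[symmetric] m_def monom_mod'[OF L])
  then have "(q * w) mod m = R mod m" by (simp add: mod_eq_dvd_iff)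
  also have "R mod m = R"
  proof (rule mod_poly_less)
    have ml: "x mod L \<le> L - 1" for x
    proof -
      have "x mod L < L" using L by simp
      then show ?thesis by linarith
    qed
    have "coeff R t = 0" if "t > L - 1" for t
    proof -
      have ne: "(j+k) mod L \<noteq> t" for j k using ml[of "j+k"] that by linarith
      show ?thesis unfolding R_def coeff_sum coeff_monom by (simp add: ne)
    qed
    then have "degree R \<le> L - 1" by (intro degree_le) auto
    then show "degree R < degree m" using L by (simp add: m_def degree_cyc_modulus)
  qed
  finally have e: "cyc_mult L q w = R" by (simp add: cyc_mult_def m_def)
  have "coeff R i = (\<Sum>j<L. \<Sum>k<L. if k = (i + L - j) mod L then coeff q j * coeff w k else 0)"
    unfolding R_def coeff_sum coeff_monom
    by (intro sum.cong refl) (use i in \<open>auto simp: modeq_aux\<close>)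
  also have "\<dots> = (\<Sum>j<L. coeff q j * coeff w ((i + L - j) mod L))"
    using L by (simp add: sum.delta')
  finally show ?thesis using e by simp
qed



lemma count_tri:
  fixes F :: "nat \<Rightarrow> (nat \<Rightarrow> bit) \<Rightarrow> bit" and D :: "nat set"
  assumes loc: "\<And>r v v'. r \<in> D \<Longrightarrow> (\<And>i. i < r \<Longrightarrow> v i = v' i) \<Longrightarrow> F r v = F r v'"
  shows "finite {v. (\<forall>i\<ge>N. v i = 0) \<and> (\<forall>r\<in>D. r < N \<longrightarrow> v r = F r v)} \<and>
         card {v. (\<forall>i\<ge>N. v i = 0) \<and> (\<forall>r\<in>D. r < N \<longrightarrow> v r = F r v)} = 2 ^ (N - card (D \<inter> {..<N}))"
proof (induction N)
  case 0
  have "{v. (\<forall>i\<ge>0::nat. v i = (0::bit)) \<and> (\<forall>r\<in>D. r < 0 \<longrightarrow> v r = F r v)} = {\<lambda>_. 0}"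
    by auto
  then show ?case by simp
next
  case (Suc N)
  define A where "A = {v. (\<forall>i\<ge>N. v i = 0) \<and> (\<forall>r\<in>D. r < N \<longrightarrow> v r = F r v)}"
  define A' where "A' = {v. (\<forall>i\<ge>Suc N. v i = 0) \<and> (\<forall>r\<in>D. r < Suc N \<longrightarrow> v r = F r v)}"
  have fA: "finite A" and cA: "card A = 2 ^ (N - card (D \<inter> {..<N}))" using Suc unfolding A_def by auto
  have cle: "card (D \<inter> {..<N}) \<le> N"
    by (metis card_lessThan card_mono finite_lessThan inf_le2)
  have upd: "\<And>v c r. r < N \<Longrightarrow> r \<in> D \<Longrightarrow> F r (v(N:=c)) = F r v"
    by (rule loc) auto
  show ?case
  proof (cases "N \<in> D")
    case True
    have eq: "A' = (\<lambda>v. v(N := F N v)) ` A"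
    proof
      show "A' \<subseteq> (\<lambda>v. v(N := F N v)) ` A"
      proof
        fix u assume u: "u \<in> A'"
        have "u(N:=0) \<in> A" using u unfolding A_def A'_def
          by (auto simp: upd)
        moreover have "u = (u(N:=0))(N := F N (u(N:=0)))"
          using u True unfolding A'_def by (auto simp: upd loc[of N "u(N:=0)" u])
        ultimately show "u \<in> (\<lambda>v. v(N := F N v)) ` A" by blast
      qed
      show "(\<lambda>v. v(N := F N v)) ` A \<subseteq> A'"
        unfolding A_def A'_def using True
        by (auto simp: upd less_Suc_eq loc[of N "v(N:=F N v)" v for v])
    qed
    have inj: "inj_on (\<lambda>v. v(N := F N v)) A"
    proof (rule inj_onI)
      fix v w assume "v \<in> A" "w \<in> A" and e: "v(N := F N v) = w(N := F N w)"
      show "v = w"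
      proof
        fix i show "v i = w i"
          using \<open>v \<in> A\<close> \<open>w \<in> A\<close> fun_cong[OF e, of i] unfolding A_def
          by (cases "i = N") auto
      qed
    qed
    have "D \<inter> {..<Suc N} = insert N (D \<inter> {..<N})" using True by auto
    then have "card (D \<inter> {..<Suc N}) = Suc (card (D \<inter> {..<N}))" by simp
    then show ?thesis using eq inj fA cA cle unfolding A'_def[symmetric]
      by (simp add: card_image Suc_diff_le)
  next
    case False
    have eq: "A' = A \<union> (\<lambda>v. v(N := 1)) ` A"
    proof
      show "A' \<subseteq> A \<union> (\<lambda>v. v(N := 1)) ` A"
      proof
        fix u assume u: "u \<in> A'"
        have uA: "u(N:=0) \<in> A" using u False unfolding A_def A'_def
          by (auto simp: upd)
        show "u \<in> A \<union> (\<lambda>v. v(N := 1)) ` A"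
        proof (cases "u N = 0")
          case True then show ?thesis using uA by (metis UnI1 fun_upd_triv)
        next
          case f: False then have "u N = 1" by simp
          then have "u = (u(N:=0))(N:=1)" by auto
          then show ?thesis using uA by blast
        qed
      qed
      show "A \<union> (\<lambda>v. v(N := 1)) ` A \<subseteq> A'"
        unfolding A_def A'_def using False
        by (auto simp: upd less_Suc_eq)
    qed
    have inj: "inj_on (\<lambda>v. v(N := 1)) A"
    proof (rule inj_onI)
      fix v w assume "v \<in> A" "w \<in> A" and e: "v(N := 1) = w(N := 1)"
      show "v = w"
      proof
        fix i show "v i = w i"
          using \<open>v \<in> A\<close> \<open>w \<in> A\<close> fun_cong[OF e, of i] unfolding A_def
          by (cases "i = N") auto
      qed
    qed
    have disj: "A \<inter> (\<lambda>v. v(N := 1)) ` A = {}" unfolding A_def by auto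
    have "D \<inter> {..<Suc N} = D \<inter> {..<N}" using False by (auto simp: less_Suc_eq)
    then show ?thesis using eq inj fA cA cle disj unfolding A'_def[symmetric]
      by (simp add: card_Un_disjoint card_image Suc_diff_le)
  qed
qed




lemma bit_cases': "(x::bit) = 0 \<or> x = 1" by (metis bit_not_zero_iff)

lemma bit_eq_swap: "((x::bit) + g = y) = (x = y + g)"
  using bit_cases'[of x] bit_cases'[of g] bit_cases'[of y] by auto

theorem mainTheorem7:
  fixes L n :: nat and q y :: "bit poly" and S :: "nat set"
  assumes "1 \<le> n" and "n \<le> L"
    and "q \<noteq> 0" and "degree q \<le> n - 1"
    and "consecutive_mod L (n - 1) S"
    and "y \<in> cyc_ring L"
  shows "real (card {w \<in> cyc_ring L. \<forall>i<L. i \<notin> S \<longrightarrow>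
                 coeff (cyc_mult L q w) i = coeff y i}) / real (card (cyc_ring L))
         = 1 / 2 ^ (L - n + 1)"
proof -
  have L: "L > 0" using assms by linarith
  obtain k :: int where k: "S = (\<lambda>i. nat ((k + int i) mod int L)) ` {..<n-1}"
    using assms(5) unfolding consecutive_mod_def by blast
  define b where "b = nat (k mod int L)"
  have bL: "b < L" using L unfolding b_def by (simp add: nat_less_iff)
  define pos where "pos s = (b + s) mod L" for s
  have posL: "pos s < L" for s using L unfolding pos_def by simp
  have pos_iff: "pos s = i \<longleftrightarrow> s = (i + L - b) mod L" if "s < L" "i < L" for s i
    unfolding pos_def using modeq_aux[OF bL that] .
  have S: "S = pos ` {..<n-1}"
  proof -
    have "nat ((k + int t) mod int L) = pos t" for t
    proof -
      have "int (pos t) = (int b + int t) mod int L"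
        unfolding pos_def by (simp add: of_nat_mod)
      also have "\<dots> = (k mod int L + int t) mod int L" using L by (simp add: b_def)
      also have "\<dots> = (k + int t) mod int L" by (simp add: mod_add_left_eq)
      finally show ?thesis by (metis nat_int)
    qed
    then show ?thesis unfolding k by simp
  qed
  have inS: "i \<in> S \<longleftrightarrow> (i + L - b) mod L < n - 1" if "i < L" for i
  proof
    assume "i \<in> S"
    then obtain t where t: "t < n - 1" "i = pos t" unfolding S by blast
    then have "t = (i + L - b) mod L" using pos_iff[of t i] that assms by auto
    then show "(i + L - b) mod L < n - 1" using t by simp
  next
    assume h: "(i + L - b) mod L < n - 1"
    have "pos ((i + L - b) mod L) = i" using pos_iff[of "(i + L - b) mod L" i] that L by simp
    then show "i \<in> S" unfolding S using h by force
  qed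
  define a where "a = (LEAST j. coeff q j \<noteq> 0)"
  have ex: "coeff q (degree q) \<noteq> 0" using assms(3) by simp
  have qa: "coeff q a = 1" unfolding a_def using LeastI[of "\<lambda>j. coeff q j \<noteq> 0", OF ex] by simp
  have a_le: "a \<le> n - 1" unfolding a_def using Least_le[of "\<lambda>j. coeff q j \<noteq> 0", OF ex] assms(4) by simp
  have q_below: "coeff q j = 0" if "j < a" for j using not_less_Least[of j "\<lambda>j. coeff q j \<noteq> 0"] that unfolding a_def by simp
  have q_above: "coeff q j = 0" if "j > n - 1" for j using assms(4) that by (simp add: coeff_eq_0)
  have dq: "degree q < L" using assms by linarith
  define B where "B = {v :: nat \<Rightarrow> bit. \<forall>i\<ge>L. v i = 0}"
  define \<phi> where "\<phi> w = (\<lambda>t. if t < L then coeff w (pos t) else 0)" for w :: "bit poly"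
  define \<psi> where "\<psi> v = Poly (map (\<lambda>i. v ((i + L - b) mod L)) [0..<L])" for v :: "nat \<Rightarrow> bit"
  have coeff_\<psi>: "coeff (\<psi> v) i = (if i < L then v ((i + L - b) mod L) else 0)" for v i
    unfolding \<psi>_def by (simp add: nth_default_def)
  have bij: "bij_betw \<phi> (cyc_ring L) B"
  proof (rule bij_betw_byWitness[where f' = \<psi>])
    show "\<forall>w\<in>cyc_ring L. \<psi> (\<phi> w) = w"
    proof
      fix w assume w: "w \<in> cyc_ring L"
      show "\<psi> (\<phi> w) = w"
      proof (rule poly_eqI)
        fix i
        show "coeff (\<psi> (\<phi> w)) i = coeff w i"
        proof (cases "i < L")
          case True
          then have "pos ((i + L - b) mod L) = i" using pos_iff[of "(i + L - b) mod L" i] L by simp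
          then show ?thesis using True L by (simp add: coeff_\<psi> \<phi>_def)
        next
          case False
          then show ?thesis using w by (simp add: coeff_\<psi> cyc_ring_def coeff_eq_0)
        qed
      qed
    qed
    show "\<forall>v\<in>B. \<phi> (\<psi> v) = v"
    proof
      fix v assume v: "v \<in> B"
      show "\<phi> (\<psi> v) = v"
      proof
        fix t
        show "\<phi> (\<psi> v) t = v t"
        proof (cases "t < L")
          case True
          then have "(pos t + L - b) mod L = t" using pos_iff[of t "pos t"] posL by simp
          then show ?thesis using True posL by (simp add: coeff_\<psi> \<phi>_def)
        next
          case False
          then show ?thesis using v by (simp add: B_def \<phi>_def)
        qed
      qed
    qed
    show "\<phi> ` cyc_ring L \<subseteq> B" unfolding B_def \<phi>_def by auto
    show "\<psi> ` B \<subseteq> cyc_ring L"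
    proof
      fix p assume "p \<in> \<psi> ` B"
      then obtain v where p: "p = \<psi> v" by blast
      have "degree p \<le> L - 1" unfolding p by (rule degree_le) (auto simp: coeff_\<psi>)
      then show "p \<in> cyc_ring L" using L unfolding cyc_ring_def by simp
    qed
  qed
  define D where "D = {n - 1 - a..<L - a}"
  define F where "F r v = coeff y (pos (r + a)) + (\<Sum>j\<in>{a<..<L}. coeff q j * v (r + a - j))"
    for r and v :: "nat \<Rightarrow> bit"
  define C where "C v \<longleftrightarrow> (\<forall>r\<in>D. r < L \<longrightarrow> v r = F r v)" for v :: "nat \<Rightarrow> bit"
  have sum_split: "(\<Sum>j<L. coeff q j * v (s - j)) = v (s - a) + (\<Sum>j\<in>{a<..<L}. coeff q j * v (s - j))"
    for v s
  proof -
    have aL: "a < L" using a_le assms by linarith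
    define f where "f j = coeff q j * v (s - j)" for j
    have e: "{..<L} = insert a ({..<a} \<union> {a<..<L})" using aL by auto
    have "(\<Sum>j<L. f j) = (\<Sum>j\<in>insert a ({..<a} \<union> {a<..<L}). f j)" by (simp only: e)
    also have "\<dots> = f a + (\<Sum>j\<in>{..<a} \<union> {a<..<L}. f j)" by (rule sum.insert) auto
    also have "(\<Sum>j\<in>{..<a} \<union> {a<..<L}. f j) = (\<Sum>j\<in>{..<a}. f j) + (\<Sum>j\<in>{a<..<L}. f j)"
      by (rule sum.union_disjoint) auto
    also have "(\<Sum>j\<in>{..<a}. f j) = 0" by (rule sum.neutral) (simp add: f_def q_below)
    finally show ?thesis unfolding f_def by (simp only: qa mult_1 add_0)
  qed
  have cond: "(\<forall>i<L. i \<notin> S \<longrightarrow> coeff (cyc_mult L q w) i = coeff y i) \<longleftrightarrow> C (\<phi> w)"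
    if w: "w \<in> cyc_ring L" for w
  proof -
    have dw: "degree w < L" using w unfolding cyc_ring_def by simp
    have res: "coeff (cyc_mult L q w) (pos s) = (\<Sum>j<L. coeff q j * \<phi> w (s - j))"
      if s: "n - 1 \<le> s" "s < L" for s
    proof -
      have "coeff (cyc_mult L q w) (pos s) = (\<Sum>j<L. coeff q j * coeff w ((pos s + L - j) mod L))"
        by (rule cyc_mult_coeff[OF L dq dw posL])
      also have "\<dots> = (\<Sum>j<L. coeff q j * \<phi> w (s - j))"
      proof (rule sum.cong[OF refl])
        fix j assume j: "j \<in> {..<L}"
        show "coeff q j * coeff w ((pos s + L - j) mod L) = coeff q j * \<phi> w (s - j)"
        proof (cases "j \<le> n - 1")
          case True
          have "(j + pos (s - j)) mod L = pos s"
            unfolding pos_def using True s by (simp add: mod_add_right_eq)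
          then have "pos (s - j) = (pos s + L - j) mod L"
            using modeq_aux[of j L "pos (s - j)" "pos s"] j posL by simp
          then show ?thesis using s by (simp add: \<phi>_def)
        next
          case False then show ?thesis by (simp add: q_above)
        qed
      qed
      finally show ?thesis .
    qed
    have "(\<forall>i<L. i \<notin> S \<longrightarrow> coeff (cyc_mult L q w) i = coeff y i) \<longleftrightarrow>
          (\<forall>s. n - 1 \<le> s \<longrightarrow> s < L \<longrightarrow> coeff (cyc_mult L q w) (pos s) = coeff y (pos s))"
    proof
      assume h: "\<forall>i<L. i \<notin> S \<longrightarrow> coeff (cyc_mult L q w) i = coeff y i"
      show "\<forall>s. n - 1 \<le> s \<longrightarrow> s < L \<longrightarrow> coeff (cyc_mult L q w) (pos s) = coeff y (pos s)"
      proof (intro allI impI)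
        fix s assume s: "n - 1 \<le> s" "s < L"
        have "(pos s + L - b) mod L = s" using pos_iff[of s "pos s"] posL s by simp
        then have "pos s \<notin> S" using inS[OF posL] s by simp
        then show "coeff (cyc_mult L q w) (pos s) = coeff y (pos s)" using h posL by blast
      qed
    next
      assume h: "\<forall>s. n - 1 \<le> s \<longrightarrow> s < L \<longrightarrow> coeff (cyc_mult L q w) (pos s) = coeff y (pos s)"
      show "\<forall>i<L. i \<notin> S \<longrightarrow> coeff (cyc_mult L q w) i = coeff y i"
      proof (intro allI impI)
        fix i assume i: "i < L" "i \<notin> S"
        define s where "s = (i + L - b) mod L"
        have sL: "s < L" unfolding s_def using L by simp
        have ps: "pos s = i" using pos_iff[OF sL i(1)] s_def by simp
        have "n - 1 \<le> s" using inS[OF i(1)] i(2) s_def by simp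
        then show "coeff (cyc_mult L q w) i = coeff y i" using h sL ps by blast
      qed
    qed
    also have "\<dots> \<longleftrightarrow> (\<forall>s. n - 1 \<le> s \<longrightarrow> s < L \<longrightarrow>
        \<phi> w (s - a) = coeff y (pos s) + (\<Sum>j\<in>{a<..<L}. coeff q j * \<phi> w (s - j)))"
    proof -
      have pt: "(coeff (cyc_mult L q w) (pos s) = coeff y (pos s)) =
          (\<phi> w (s - a) = coeff y (pos s) + (\<Sum>j\<in>{a<..<L}. coeff q j * \<phi> w (s - j)))"
        if "n - 1 \<le> s" "s < L" for s
        unfolding res[OF that] sum_split by (rule bit_eq_swap)
      show ?thesis using pt by blast
    qed
    also have "\<dots> \<longleftrightarrow> C (\<phi> w)"
    proof
      assume h: "\<forall>s. n - 1 \<le> s \<longrightarrow> s < L \<longrightarrow>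
        \<phi> w (s - a) = coeff y (pos s) + (\<Sum>j\<in>{a<..<L}. coeff q j * \<phi> w (s - j))"
      show "C (\<phi> w)" unfolding C_def
      proof (intro ballI impI)
        fix r assume r: "r \<in> D" "r < L"
        then have "n - 1 \<le> r + a" "r + a < L" unfolding D_def by auto
        then show "\<phi> w r = F r (\<phi> w)" using h[rule_format, of "r + a"] unfolding F_def by simp
      qed
    next
      assume h: "C (\<phi> w)"
      show "\<forall>s. n - 1 \<le> s \<longrightarrow> s < L \<longrightarrow>
        \<phi> w (s - a) = coeff y (pos s) + (\<Sum>j\<in>{a<..<L}. coeff q j * \<phi> w (s - j))"
      proof (intro allI impI)
        fix s assume s: "n - 1 \<le> s" "s < L"
        then have sD: "s - a \<in> D" "s - a < L" and sa: "s - a + a = s" using a_le unfolding D_def by auto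
        have "\<phi> w (s - a) = F (s - a) (\<phi> w)" using h sD unfolding C_def by blast
        then show "\<phi> w (s - a) = coeff y (pos s) + (\<Sum>j\<in>{a<..<L}. coeff q j * \<phi> w (s - j))"
          unfolding F_def sa .
      qed
    qed
    finally show ?thesis .
  qed
  have loc: "F r v = F r v'" if "r \<in> D" "\<And>i. i < r \<Longrightarrow> v i = v' i" for r v v'
  proof -
    have "coeff q j * v (r + a - j) = coeff q j * v' (r + a - j)" if j: "j \<in> {a<..<L}" for j
    proof (cases "j \<le> n - 1")
      case True
      then have "r + a - j < r" using j \<open>r \<in> D\<close> unfolding D_def by auto
      then show ?thesis using \<open>\<And>i. i < r \<Longrightarrow> v i = v' i\<close> by simp
    next
      case False then show ?thesis by (simp add: q_above)
    qed
    then have "(\<Sum>j\<in>{a<..<L}. coeff q j * v (r + a - j)) = (\<Sum>j\<in>{a<..<L}. coeff q j * v' (r + a - j))"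
      by (rule sum.cong[OF refl])
    then show ?thesis unfolding F_def by (simp only:)
  qed
  have ct: "card {v. (\<forall>i\<ge>L. v i = 0) \<and> (\<forall>r\<in>D. r < L \<longrightarrow> v r = F r v)} = 2 ^ (L - card (D \<inter> {..<L}))"
    using count_tri[of D F L] loc by blast
  have DL: "D \<inter> {..<L} = D" unfolding D_def by auto
  have cD: "card D = L - n + 1" unfolding D_def using a_le assms by simp
  have c1: "card {v \<in> B. C v} = 2 ^ (n - 1)"
  proof -
    have "{v \<in> B. C v} = {v. (\<forall>i\<ge>L. v i = 0) \<and> (\<forall>r\<in>D. r < L \<longrightarrow> v r = F r v)}"
      unfolding B_def C_def by auto
    then have "card {v \<in> B. C v} = 2 ^ (L - (L - n + 1))" using ct DL cD by simp
    also have "L - (L - n + 1) = n - 1" using assms by simp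
    finally show ?thesis .
  qed
  have c2: "card B = 2 ^ L"
    using count_tri[of "{}" F L] unfolding B_def by simp
  have inj: "inj_on \<phi> (cyc_ring L)" using bij by (rule bij_betw_imp_inj_on)
  have img: "\<phi> ` {w \<in> cyc_ring L. C (\<phi> w)} = {v \<in> B. C v}"
  proof
    show "\<phi> ` {w \<in> cyc_ring L. C (\<phi> w)} \<subseteq> {v \<in> B. C v}"
      using bij by (auto simp: bij_betw_def)
    show "{v \<in> B. C v} \<subseteq> \<phi> ` {w \<in> cyc_ring L. C (\<phi> w)}"
    proof
      fix v assume v: "v \<in> {v \<in> B. C v}"
      then obtain w where "w \<in> cyc_ring L" "v = \<phi> w" using bij by (auto simp: bij_betw_def)
      then show "v \<in> \<phi> ` {w \<in> cyc_ring L. C (\<phi> w)}" using v by blast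
    qed
  qed
  have "{w \<in> cyc_ring L. \<forall>i<L. i \<notin> S \<longrightarrow> coeff (cyc_mult L q w) i = coeff y i} =
        {w \<in> cyc_ring L. C (\<phi> w)}" using cond by blast
  moreover have "card {w \<in> cyc_ring L. C (\<phi> w)} = 2 ^ (n - 1)"
    using card_image[OF inj_on_subset[OF inj, of "{w \<in> cyc_ring L. C (\<phi> w)}"]] img c1 by auto
  moreover have "card (cyc_ring L) = 2 ^ L" using bij_betw_same_card[OF bij] c2 by simp
  moreover have "(2::real) ^ L = 2 ^ (n - 1) * 2 ^ (L - n + 1)"
  proof -
    have "L = (n - 1) + (L - n + 1)" using assms by simp
    then have "(2::real) ^ L = 2 ^ ((n - 1) + (L - n + 1))" by (simp only:)
    then show ?thesis by (simp only: power_add)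
  qed
  ultimately show ?thesis by simp
qed


end
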